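(* Let $G$ be a hereditarily normal topological group that contains a non-trivial convergent sequence. Then $G$ has a $G_\delta$-diagonal.
   Context: All spaces are assumed to be $T_1$. A space $X$ has a $G_\delta$-diagonal if $\{\langle x,x\rangle : x\in X\}$ is the intersection of a countable family of open subsets of $X\times X$. A non-trivial convergent sequence is a subspace homeomorphic to the subspace $\{0\}\cup\{1/n : n=1,2,3,\dots\}$ of the real line. *)

theory Defs
  imports "HOL-Analysis.Analysis"
begin

text \<open>A (not necessarily abelian, additively written) group on a topological space type
  is a topological group if multiplication and inversion are continuous
  (multiplication w.r.t. the product topology on the product type).\<close>
definition topological_group :: "('a::{topological_space, group_add}) itself \<Rightarrow> bool" where
  "topological_group _ \<longleftrightarrow>
     continuous_on (UNIV :: ('a \<times> 'a) set) (\<lambda>p. fst p + snd p) \<and>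
     continuous_on (UNIV :: 'a set) uminus"

definition hereditarily_normal :: "('a::topological_space) itself \<Rightarrow> bool" where
  "hereditarily_normal _ \<longleftrightarrow> (\<forall>S :: 'a set. normal_space (subtopology euclidean S))"

definition has_nontrivial_convergent_sequence :: "('a::topological_space) itself \<Rightarrow> bool" where
  "has_nontrivial_convergent_sequence _ \<longleftrightarrow>
     (\<exists>S :: 'a set. subtopology euclidean S homeomorphic_space
        subtopology (euclidean :: real topology) (insert 0 {1 / real n | n. n \<ge> 1}))"

definition has_gdelta_diagonal :: "('a::topological_space) itself \<Rightarrow> bool" where
  "has_gdelta_diagonal _ \<longleftrightarrow>
     (\<exists>\<U> :: ('a \<times> 'a) set set. countable \<U> \<and> (\<forall>U\<in>\<U>. open U) \<and>
        \<Inter>\<U> = {(x, x) | x. True})"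

end

theory Submission
  imports Defs
begin

lemma cont_plus_gen:
  fixes f g :: "'b::topological_space \<Rightarrow> 'a::{topological_space,group_add}"
  assumes "continuous_on (UNIV :: ('a \<times> 'a) set) (\<lambda>p. fst p + snd p)"
    and "continuous_on UNIV f" "continuous_on UNIV g"
  shows "continuous_on UNIV (\<lambda>x. f x + g x)"
  using continuous_on_compose2[OF assms(1) continuous_on_Pair[OF assms(2,3)]] by simp

lemma open_vim:
  assumes "continuous_on UNIV f" "open B"
  shows "open (f -` B)"
  using assms continuous_on_open_vimage[of UNIV f] by auto

lemma cont_seq:
  assumes "continuous_on UNIV h" "(t \<longlongrightarrow> p) F"
  shows "((\<lambda>n. h (t n)) \<longlongrightarrow> h p) F"
proof (rule topological_tendstoI)
  fix W assume W: "open W" "h p \<in> W"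
  then have "open (h -` W)" using open_vim[OF assms(1)] by blast
  moreover have "p \<in> h -` W" using W by simp
  ultimately have "\<forall>\<^sub>F n in F. t n \<in> h -` W" using assms(2) topological_tendstoD by blast
  then show "\<forall>\<^sub>F n in F. h (t n) \<in> W" by simp
qed

lemma point_gdelta:
  fixes p :: "'a::{t1_space, group_add}" and t :: "nat \<Rightarrow> 'a"
  assumes add: "continuous_on (UNIV :: ('a \<times> 'a) set) (\<lambda>p. fst p + snd p)"
    and hn: "\<And>S::'a set. normal_space (top_of_set S)"
    and lim: "t \<longlonglongrightarrow> p" and tp: "\<And>n. t n \<noteq> p"
  shows "\<exists>\<O>::'a set set. countable \<O> \<and> (\<forall>U\<in>\<O>. open U) \<and> \<Inter>\<O> = {p}"
proof -
  have t1: "t1_space (euclidean :: 'a topology)"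
    unfolding t1_space_def by (simp add: t1_space)
  have Hs: "Hausdorff_space (euclidean :: 'a topology)"
    using normal_t1_imp_Hausdorff_space[OF _ t1] hn[of UNIV] by simp
  have sep: "\<exists>D E. open D \<and> open E \<and> t n \<in> D \<and> p \<in> E \<and> D \<inter> E = {}" for n
    using Hs tp[of n] unfolding Hausdorff_space_def disjnt_def by auto
  then obtain D E where DE: "\<And>n. open (D n) \<and> open (E n) \<and> t n \<in> D n \<and> p \<in> E n \<and> D n \<inter> E n = {}"
    by metis
  define C where "C = insert p (range t)"
  have "compactin euclidean C"
    unfolding C_def by (rule compactin_sequence_with_limit) (use lim in auto)
  then have "closedin euclidean C" using Hs compactin_imp_closedin by blast
  then have Ccl: "closed C" by simp
  define R where "R = - (\<Union>n. D n)"
  have Rcl: "closed R" unfolding R_def using DE by auto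
  have pR: "p \<in> R" unfolding R_def using DE by blast
  define Z where "Z = - {p}"
  have Zo: "open Z" unfolding Z_def by (simp add: open_Compl)
  have cA: "closedin (top_of_set Z) (R \<inter> Z)"
    using closedin_closed_Int[OF Rcl, of Z] by (simp add: Int_commute)
  have cB: "closedin (top_of_set Z) (C \<inter> Z)"
    using closedin_closed_Int[OF Ccl, of Z] by (simp add: Int_commute)
  have CZ: "C \<inter> Z = range t" unfolding C_def Z_def using tp by auto
  have dj: "disjnt (R \<inter> Z) (C \<inter> Z)"
    unfolding CZ R_def disjnt_def using DE by blast
  obtain U V where UV: "openin (top_of_set Z) U" "openin (top_of_set Z) V"
    "R \<inter> Z \<subseteq> U" "C \<inter> Z \<subseteq> V" "disjnt U V"
  proof -
    have "normal_space (top_of_set Z)" by (rule hn)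
    then have "\<exists>U V. openin (top_of_set Z) U \<and> openin (top_of_set Z) V \<and> R \<inter> Z \<subseteq> U \<and> C \<inter> Z \<subseteq> V \<and> disjnt U V"
      unfolding normal_space_def using cA cB dj by simp
    then show ?thesis using that by metis
  qed
  have Uo: "open U" using UV(1) Zo openin_open_trans by blast
  have Vo: "open V" using UV(2) Zo openin_open_trans by blast
  have tV: "t n \<in> V" for n using UV(4) CZ by auto
  have cL: "continuous_on UNIV (\<lambda>x. c + x)" for c :: 'a
    by (rule cont_plus_gen[OF add continuous_on_const continuous_on_id])
  have cR: "continuous_on UNIV (\<lambda>x. x + c)" for c :: 'a
    by (rule cont_plus_gen[OF add continuous_on_id continuous_on_const])
  define Ob where "Ob n = (\<lambda>x. x + (- p + t n)) -` V" for n
  have Oo: "open (Ob n)" for n unfolding Ob_def by (rule open_vim[OF cR Vo])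
  have pO: "p \<in> Ob n" for n unfolding Ob_def using tV[of n] by (simp add: add.assoc[symmetric])
  have conv: "(\<lambda>n. x + (- p + t n)) \<longlonglongrightarrow> x" for x
  proof -
    have "(\<lambda>n. - p + t n) \<longlonglongrightarrow> - p + p"
      using cont_seq[OF cL lim] .
    then have "(\<lambda>n. - p + t n) \<longlonglongrightarrow> 0" by simp
    from cont_seq[OF cL this, of x] show ?thesis by simp
  qed
  define \<O> where "\<O> = range Ob \<union> range E"
  have "countable \<O>" unfolding \<O>_def by simp
  moreover have "\<forall>U\<in>\<O>. open U" unfolding \<O>_def using Oo DE by auto
  moreover have "\<Inter>\<O> = {p}"
  proof
    show "{p} \<subseteq> \<Inter>\<O>" unfolding \<O>_def using pO DE by auto
    show "\<Inter>\<O> \<subseteq> {p}"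
    proof
      fix x assume x: "x \<in> \<Inter>\<O>"
      show "x \<in> {p}"
      proof (rule ccontr)
        assume xp: "x \<notin> {p}"
        show False
        proof (cases "x \<in> R")
          case True
          then have "x \<in> U" using UV(3) xp Z_def by auto
          then have "\<forall>\<^sub>F n in sequentially. x + (- p + t n) \<in> U"
            using conv[of x] Uo topological_tendstoD by blast
          then obtain n where "x + (- p + t n) \<in> U"
            using eventually_sequentially by auto
          then have "x \<notin> Ob n" using UV(5) unfolding Ob_def disjnt_def by auto
          then show False using x unfolding \<O>_def by auto
        next
          case False
          then obtain n where "x \<in> D n" unfolding R_def by auto
          then have "x \<notin> E n" using DE by auto
          then show False using x unfolding \<O>_def by auto
        qed
      qed
    qed
  qed
  ultimately show ?thesis by blast
qed

theorem theorem2p3: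
  fixes G :: "('a::{t1_space, group_add}) itself"
  assumes "topological_group G"
    and "hereditarily_normal G"
    and "has_nontrivial_convergent_sequence G"
  shows "has_gdelta_diagonal G"
proof -
  have add: "continuous_on (UNIV :: ('a \<times> 'a) set) (\<lambda>p. fst p + snd p)"
    and neg: "continuous_on (UNIV :: 'a set) uminus"
    using assms(1) unfolding topological_group_def by auto
  have hn: "\<And>S::'a set. normal_space (top_of_set S)"
    using assms(2) unfolding hereditarily_normal_def by auto
  define K where "K = insert (0::real) {1 / real n | n. n \<ge> 1}"
  obtain S' :: "'a set" where "top_of_set S' homeomorphic_space top_of_set K"
    using assms(3) unfolding has_nontrivial_convergent_sequence_def K_def by blast
  then obtain f g where fg: "homeomorphic_maps (top_of_set S') (top_of_set K) f g"
    unfolding homeomorphic_space_def by blast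
  have gc: "continuous_map (top_of_set K) (top_of_set S') g"
    and fgK: "\<And>y. y \<in> K \<Longrightarrow> f (g y) = y"
    using fg unfolding homeomorphic_maps_def by auto
  define r where "r n = 1 / real (Suc n)" for n
  have rK: "r n \<in> K" for n
  proof -
    have "\<exists>m. r n = 1 / real m \<and> m \<ge> 1" unfolding r_def by (rule exI[of _ "Suc n"]) simp
    then show ?thesis unfolding K_def by blast
  qed
  have K0: "0 \<in> K" unfolding K_def by blast
  have rlim: "r \<longlonglongrightarrow> 0"
    using LIMSEQ_inverse_real_of_nat unfolding r_def by (simp add: inverse_eq_divide)
  have "limitin (top_of_set K) r 0 sequentially"
    unfolding limitin_subtopology using rK rlim K0 by simp
  from continuous_map_limit[OF gc this]
  have "limitin (top_of_set S') (g \<circ> r) (g 0) sequentially" .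
  then have lim: "(g \<circ> r) \<longlonglongrightarrow> g 0"
    unfolding limitin_subtopology by simp
  have tp: "(g \<circ> r) n \<noteq> g 0" for n
  proof
    assume "(g \<circ> r) n = g 0"
    then have "f (g (r n)) = f (g 0)" by simp
    then have "r n = 0" using fgK[OF rK[of n]] fgK[OF K0] by simp
    then show False unfolding r_def by simp
  qed
  obtain \<O> :: "'a set set" where O: "countable \<O>" "\<forall>U\<in>\<O>. open U" "\<Inter>\<O> = {g 0}"
    using point_gdelta[OF add hn lim tp] by blast
  define p where "p = g 0"
  define h where "h = (\<lambda>q::'a \<times> 'a. fst q + - snd q + p)"
  have c1: "continuous_on (UNIV::('a\<times>'a) set) (\<lambda>q. - snd q)"
    using continuous_on_compose2[OF neg continuous_on_snd[OF continuous_on_id]] by simp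
  have c2: "continuous_on (UNIV::('a\<times>'a) set) (\<lambda>q. fst q + - snd q)"
    by (rule cont_plus_gen[OF add continuous_on_fst[OF continuous_on_id] c1])
  have hc: "continuous_on UNIV h"
    unfolding h_def by (rule cont_plus_gen[OF add c2 continuous_on_const])
  define \<U> where "\<U> = (\<lambda>W. h -` W) ` \<O>"
  have "countable \<U>" unfolding \<U>_def using O(1) by simp
  moreover have "\<forall>U\<in>\<U>. open U" unfolding \<U>_def using O(2) open_vim[OF hc] by blast
  moreover have "\<Inter>\<U> = {(x, x) | x. True}"
  proof -
    have "\<Inter>\<U> = h -` \<Inter>\<O>" unfolding \<U>_def by (rule set_eqI) simp
    also have "\<dots> = h -` {p}" using O(3) p_def by simp
    also have "\<dots> = {(x, x) | x. True}"
    proof (rule set_eqI)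
      fix q :: "'a \<times> 'a"
      obtain a b where q: "q = (a, b)" by (cases q)
      have "h q = p \<longleftrightarrow> a + - b + p = 0 + p" unfolding h_def q by simp
      also have "\<dots> \<longleftrightarrow> a + - b = 0" by (rule add_right_cancel)
      also have "\<dots> \<longleftrightarrow> a - b = 0" by (simp only: diff_conv_add_uminus)
      also have "\<dots> \<longleftrightarrow> a = b" by (rule right_minus_eq)
      finally have "h q = p \<longleftrightarrow> a = b" .
      then show "q \<in> h -` {p} \<longleftrightarrow> q \<in> {(x, x) | x. True}" unfolding q by auto
    qed
    finally show ?thesis .
  qed
  ultimately show ?thesis unfolding has_gdelta_diagonal_def by (intro exI[of _ \<U>]) simp
qed

end
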